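(* For every real $x$ and every natural number $n$, $\mathrm{LB}_{\mathrm{atan}}(x,n) \le \arctan(x) \le \mathrm{UB}_{\mathrm{atan}}(x,n)$.
   Context: For $0 < x \le 1$ and natural $n$: \[\mathrm{LB}_{\mathrm{atan}}(x,n) = \sum_{i=0}^{2n+1} (-1)^i\frac{x^{2i+1}}{2i+1}, \qquad \mathrm{UB}_{\mathrm{atan}}(x,n) = \sum_{i=0}^{2n} (-1)^i\frac{x^{2i+1}}{2i+1}.\] Bounds on $\pi$: $\mathrm{LB}_{\pi}(n) = 16\,\mathrm{LB}_{\mathrm{atan}}(1/5,n) - 4\,\mathrm{UB}_{\mathrm{atan}}(1/239,n)$ and $\mathrm{UB}_{\pi}(n) = 16\,\mathrm{UB}_{\mathrm{atan}}(1/5,n) - 4\,\mathrm{LB}_{\mathrm{atan}}(1/239,n)$. Extension to all reals: $\mathrm{LB}_{\mathrm{atan}}(0,n)=\mathrm{UB}_{\mathrm{atan}}(0,n)=0$; for $x>1$: $\mathrm{LB}_{\mathrm{atan}}(x,n) = \frac{\mathrm{LB}_{\pi}(n)}{2} - \mathrm{UB}_{\mathrm{atan}}(1/x,n)$ and $\mathrm{UB}_{\mathrm{atan}}(x,n) = \frac{\mathrm{UB}_{\pi}(n)}{2} - \mathrm{LB}_{\mathrm{atan}}(1/x,n)$; for $x<0$: $\mathrm{LB}_{\mathrm{atan}}(x,n) = -\mathrm{UB}_{\mathrm{atan}}(-x,n)$ and $\mathrm{UB}_{\mathrm{atan}}(x,n) = -\mathrm{LB}_{\mathrm{atan}}(-x,n)$.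 *)

theory Defs
  imports Complex_Main
begin

text \<open>Truncated Taylor sums of arctan, intended for 0 < x \<le> 1.\<close>
definition lb_atan_base :: "real \<Rightarrow> nat \<Rightarrow> real" where
  "lb_atan_base x n = (\<Sum>i=0..2*n+1. (-1)^i * x^(2*i+1) / real (2*i+1))"

definition ub_atan_base :: "real \<Rightarrow> nat \<Rightarrow> real" where
  "ub_atan_base x n = (\<Sum>i=0..2*n. (-1)^i * x^(2*i+1) / real (2*i+1))"

definition lb_pi :: "nat \<Rightarrow> real" where
  "lb_pi n = 16 * lb_atan_base (1/5) n - 4 * ub_atan_base (1/239) n"

definition ub_pi :: "nat \<Rightarrow> real" where
  "ub_pi n = 16 * ub_atan_base (1/5) n - 4 * lb_atan_base (1/239) n"

definition lb_atan_nonneg :: "real \<Rightarrow> nat \<Rightarrow> real" where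
  "lb_atan_nonneg x n =
     (if x = 0 then 0
      else if x \<le> 1 then lb_atan_base x n
      else lb_pi n / 2 - ub_atan_base (1/x) n)"

definition ub_atan_nonneg :: "real \<Rightarrow> nat \<Rightarrow> real" where
  "ub_atan_nonneg x n =
     (if x = 0 then 0
      else if x \<le> 1 then ub_atan_base x n
      else ub_pi n / 2 - lb_atan_base (1/x) n)"

definition lb_atan :: "real \<Rightarrow> nat \<Rightarrow> real" where
  "lb_atan x n = (if x < 0 then - ub_atan_nonneg (-x) n else lb_atan_nonneg x n)"

definition ub_atan :: "real \<Rightarrow> nat \<Rightarrow> real" where
  "ub_atan x n = (if x < 0 then - lb_atan_nonneg (-x) n else ub_atan_nonneg x n)"

end

theory Submission
  imports Defs
begin

lemma base_bounds:
  fixes x :: real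
  assumes x0: "0 \<le> x" and x1: "x \<le> 1"
  shows "lb_atan_base x n \<le> arctan x \<and> arctan x \<le> ub_atan_base x n"
proof -
  define a where "a = (\<lambda>i::nat. x^(2*i+1) / real (2*i+1))"
  have apos: "\<And>i. 0 \<le> a i" unfolding a_def using x0 by simp
  have amono: "\<And>i. a (Suc i) \<le> a i"
  proof -
    fix i
    have "x^(2*Suc i+1) \<le> x^(2*i+1)"
      by (rule power_decreasing) (use x0 x1 in auto)
    moreover have "0 \<le> x^(2*Suc i+1)" using x0 by simp
    ultimately show "a (Suc i) \<le> a i" unfolding a_def
      by (intro frac_le) auto
  qed
  have alim: "a \<longlonglongrightarrow> 0"
  proof (rule tendsto_sandwich[of "\<lambda>_. 0" _ _ "\<lambda>i. 1 / real (2*i+1)"])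
    show "\<forall>\<^sub>F i in sequentially. 0 \<le> a i" using apos by simp
    show "\<forall>\<^sub>F i in sequentially. a i \<le> 1 / real (2*i+1)"
    proof (intro always_eventually allI)
      fix i
      have "x^(2*i+1) \<le> 1" using x0 x1 by (rule power_le_one)
      then show "a i \<le> 1 / real (2*i+1)" unfolding a_def
        by (intro divide_right_mono) auto
    qed
    show "(\<lambda>_. 0::real) \<longlonglongrightarrow> 0" by simp
    have "(\<lambda>i. 1 / real (Suc (2*i))) \<longlonglongrightarrow> 0"
      using LIMSEQ_subseq_LIMSEQ[OF LIMSEQ_inverse_real_of_nat, of "\<lambda>i. 2*i"]
      by (simp add: strict_mono_def o_def inverse_eq_divide)
    then show "(\<lambda>i. 1 / real (2*i+1)) \<longlonglongrightarrow> 0" by simp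
  qed
  have at: "arctan x = (\<Sum>i. (-1)^i * a i)"
    using arctan_series[of x] x0 x1 unfolding a_def by (simp add: mult.commute)
  have s1: "(\<Sum>i<2*(Suc n). (-1)^i*a i) \<le> (\<Sum>i. (-1)^i*a i)"
    using summable_Leibniz'(2)[OF alim apos amono] .
  have s2: "(\<Sum>i. (-1)^i*a i) \<le> (\<Sum>i<2*n+1. (-1)^i*a i)"
    using summable_Leibniz'(4)[OF alim apos amono] .
  have e1: "lb_atan_base x n = (\<Sum>i<2*(Suc n). (-1)^i*a i)"
    unfolding lb_atan_base_def a_def
    by (rule sum.cong) (auto simp: atLeast0AtMost lessThan_Suc_atMost[symmetric])
  have e2: "ub_atan_base x n = (\<Sum>i<2*n+1. (-1)^i*a i)"
    unfolding ub_atan_base_def a_def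
    by (rule sum.cong) (auto simp: atLeast0AtMost lessThan_Suc_atMost[symmetric])
  show ?thesis using s1 s2 e1 e2 at by simp
qed

lemma pi_bounds: "lb_pi n \<le> pi \<and> pi \<le> ub_pi n"
proof -
  have a: "lb_atan_base (1/5) n \<le> arctan (1/5) \<and> arctan (1/5) \<le> ub_atan_base (1/5) n"
    by (rule base_bounds) auto
  have b: "lb_atan_base (1/239) n \<le> arctan (1/239) \<and> arctan (1/239) \<le> ub_atan_base (1/239) n"
    by (rule base_bounds) auto
  have "pi = 16 * arctan (1/5) - 4 * arctan (1/239)" using machin by simp
  then show ?thesis using a b unfolding lb_pi_def ub_pi_def by linarith
qed

lemma nonneg_bounds:
  assumes "0 \<le> x"
  shows "lb_atan_nonneg x n \<le> arctan x \<and> arctan x \<le> ub_atan_nonneg x n"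
proof (cases "x = 0")
  case True then show ?thesis by (simp add: lb_atan_nonneg_def ub_atan_nonneg_def)
next
  case False
  show ?thesis
  proof (cases "x \<le> 1")
    case True
    then show ?thesis using base_bounds[of x n] assms False
      by (simp add: lb_atan_nonneg_def ub_atan_nonneg_def)
  next
    case gt: False
    have b: "lb_atan_base (1/x) n \<le> arctan (1/x) \<and> arctan (1/x) \<le> ub_atan_base (1/x) n"
      by (rule base_bounds) (use gt in auto)
    have "arctan (1/x) = pi/2 - arctan x" using arctan_inverse[of x] gt by simp
    then show ?thesis using b pi_bounds[of n] gt False
      by (simp add: lb_atan_nonneg_def ub_atan_nonneg_def)
  qed
qed

theorem proposition5:
  fixes x :: real and n :: nat
  shows "lb_atan x n \<le> arctan x \<and> arctan x \<le> ub_atan x n"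
proof (cases "x < 0")
  case True
  then show ?thesis using nonneg_bounds[of "-x" n]
    by (simp add: lb_atan_def ub_atan_def arctan_minus)
next
  case False
  then show ?thesis using nonneg_bounds[of x n]
    by (simp add: lb_atan_def ub_atan_def)
qed

end
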